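(* If $G$ is a simple graph whose vertices are among the variables of $S=\mathbb{K}[x_1,\dots,x_n]$, $\mathbb{K}$ a field, then $\operatorname{sreg}(S/I(G))\le\operatorname{box}(\overline{G})$.
   Context: $\overline{G}$ is the complement graph of $G$. The boxicity $\operatorname{box}(H)$ of a graph $H$ is the minimum $k$ such that $H$ is the intersection graph of a family of axis-parallel boxes in $\mathbb{R}^k$; equivalently, it is the smallest number of co-interval spanning subgraphs of $\overline{H}$ whose edge sets cover $E(\overline{H})$ (an interval graph is an intersection graph of intervals on the real line; a co-interval graph is the complement of an interval graph). $I(G)=(xy : \{x,y\}\in E(G))$ is the edge ideal. Stanley regularity: for a squarefree monomial ideal $I\subset S$, a squarefree Stanley decomposition of $S/I$ is a decomposition $S/I=\bigoplus_{i=1}^r u_i\mathbb{K}[Z_i]$ as $\mathbb{K}$-vector spaces, where $Z_i\subseteq\{x_1,\dots,x_n\}$, $u_i$ are (images of) squarefree monomials with $\operatorname{supp}(u_i)\subseteq Z_i$, and each $u_i\mathbb{K}[Z_i]$ is free over $\mathbb{K}[Z_i]$. Its Stanley regularity is $\max_i\deg(u_i)$, and $\operatorname{sreg}(S/I)$ is the minimum over all such decompositions. *)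

theory Defs
  imports Complex_Main
begin

definition simple_graph :: "'a set \<Rightarrow> 'a set set \<Rightarrow> bool" where
  "simple_graph V E \<longleftrightarrow> finite V \<and>
     (\<forall>e\<in>E. \<exists>u v. e = {u, v} \<and> u \<noteq> v \<and> u \<in> V \<and> v \<in> V)"

definition compl_edges :: "'a set \<Rightarrow> 'a set set \<Rightarrow> 'a set set" where
  "compl_edges V E = {{u, v} | u v. u \<in> V \<and> v \<in> V \<and> u \<noteq> v \<and> {u, v} \<notin> E}"

text \<open>The axis-parallel closed box in R^k with lower corner a and upper corner b
  (points of R^k are represented by their first k coordinates).\<close>
definition box_set :: "nat \<Rightarrow> (nat \<Rightarrow> real) \<Rightarrow> (nat \<Rightarrow> real) \<Rightarrow> (nat \<Rightarrow> real) set" where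
  "box_set k a b = {x. \<forall>j<k. a j \<le> x j \<and> x j \<le> b j}"

definition box_representation ::
    "'a set \<Rightarrow> 'a set set \<Rightarrow> nat \<Rightarrow> ('a \<Rightarrow> nat \<Rightarrow> real) \<Rightarrow> ('a \<Rightarrow> nat \<Rightarrow> real) \<Rightarrow> bool" where
  "box_representation V E k a b \<longleftrightarrow>
     (\<forall>v\<in>V. \<forall>j<k. a v j \<le> b v j) \<and>
     (\<forall>u\<in>V. \<forall>v\<in>V. u \<noteq> v \<longrightarrow>
        ({u, v} \<in> E \<longleftrightarrow> box_set k (a u) (b u) \<inter> box_set k (a v) (b v) \<noteq> {}))"

definition boxicity :: "'a set \<Rightarrow> 'a set set \<Rightarrow> nat" where
  "boxicity V E = (LEAST k. \<exists>a b. box_representation V E k a b)"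

text \<open>Monomials of S = K[X] are exponent vectors supported in X.\<close>
definition monomials :: "'a set \<Rightarrow> ('a \<Rightarrow> nat) set" where
  "monomials X = {m. \<forall>x. x \<notin> X \<longrightarrow> m x = 0}"

definition in_edge_ideal :: "'a set set \<Rightarrow> ('a \<Rightarrow> nat) \<Rightarrow> bool" where
  "in_edge_ideal E m \<longleftrightarrow> (\<exists>e\<in>E. \<forall>x\<in>e. 0 < m x)"

text \<open>Monomials spanning u K[Z], where u = product of the variables in U (squarefree), U \<subseteq> Z.\<close>
definition stanley_space :: "'a set \<times> 'a set \<Rightarrow> ('a \<Rightarrow> nat) set" where
  "stanley_space UZ = {m. (\<forall>x. x \<notin> snd UZ \<longrightarrow> m x = 0) \<and> (\<forall>x\<in>fst UZ. 1 \<le> m x)}"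

text \<open>Squarefree Stanley decomposition of S/I(G): list of pieces (U_i, Z_i) with
  supp(u_i) = U_i \<subseteq> Z_i \<subseteq> X; u_i K[Z_i] free over K[Z_i] (no monomial of it lies in I);
  and the direct sum equals S/I (every standard monomial lies in exactly one piece).\<close>
definition sq_stanley_decomp :: "'a set \<Rightarrow> 'a set set \<Rightarrow> ('a set \<times> 'a set) list \<Rightarrow> bool" where
  "sq_stanley_decomp X E D \<longleftrightarrow>
     (\<forall>UZ\<in>set D. fst UZ \<subseteq> snd UZ \<and> snd UZ \<subseteq> X \<and>
                  (\<forall>m\<in>stanley_space UZ. \<not> in_edge_ideal E m)) \<and>
     (\<forall>m\<in>monomials X. \<not> in_edge_ideal E m \<longrightarrow>
        (\<exists>!i. i < length D \<and> m \<in> stanley_space (D ! i)))"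

definition stanley_reg_of :: "('a set \<times> 'a set) list \<Rightarrow> nat" where
  "stanley_reg_of D = Max (insert 0 ((\<lambda>UZ. card (fst UZ)) ` set D))"

definition sreg :: "'a set \<Rightarrow> 'a set set \<Rightarrow> nat" where
  "sreg X E = Inf {stanley_reg_of D | D. sq_stanley_decomp X E D}"

end

theory Submission
  imports Defs "HOL-Library.Product_Lexorder"
begin

lemma box_inter:
  assumes "\<forall>j<k. a j \<le> b j" "\<forall>j<k. a' j \<le> b' j"
  shows "box_set k a b \<inter> box_set k a' b' \<noteq> {} \<longleftrightarrow> (\<forall>j<k. a j \<le> b' j \<and> a' j \<le> b j)"
proof
  assume "box_set k a b \<inter> box_set k a' b' \<noteq> {}"
  then obtain x where "x \<in> box_set k a b" "x \<in> box_set k a' b'" by blast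
  then show "\<forall>j<k. a j \<le> b' j \<and> a' j \<le> b j" unfolding box_set_def by force
next
  assume h: "\<forall>j<k. a j \<le> b' j \<and> a' j \<le> b j"
  have "(\<lambda>j. max (a j) (a' j)) \<in> box_set k a b \<inter> box_set k a' b'"
    using h assms unfolding box_set_def by auto
  then show "box_set k a b \<inter> box_set k a' b' \<noteq> {}" by blast
qed

lemma compl_edges_iff:
  assumes "u \<in> V" "v \<in> V" "u \<noteq> v"
  shows "{u, v} \<in> compl_edges V E \<longleftrightarrow> {u, v} \<notin> E"
proof
  assume "{u, v} \<in> compl_edges V E"
  then obtain u' v' where "{u,v} = {u',v'}" "{u',v'} \<notin> E" unfolding compl_edges_def by blast
  then show "{u, v} \<notin> E" by simp
next
  assume "{u, v} \<notin> E" then show "{u, v} \<in> compl_edges V E"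
    using assms unfolding compl_edges_def by blast
qed

lemma rep_exists:
  assumes "finite V"
  shows "\<exists>k a b. box_representation V H k a b"
proof -
  obtain f where f: "bij_betw f {0..<card V} V" using ex_bij_betw_nat_finite[OF assms] by blast
  define a where "a = (\<lambda>u i. if u = f i \<or> {u, f i} \<in> H then (0::real) else 1)"
  define b where "b = (\<lambda>u i. if u = f i then (0::real) else 1)"
  have le: "\<forall>v\<in>V. \<forall>j<card V. a v j \<le> b v j" unfolding a_def b_def by auto
  have "box_representation V H (card V) a b"
    unfolding box_representation_def
  proof (intro conjI le ballI impI)
    fix u v assume uv: "u \<in> V" "v \<in> V" "u \<noteq> v"
    have "box_set (card V) (a u) (b u) \<inter> box_set (card V) (a v) (b v) \<noteq> {} \<longleftrightarrow>
          (\<forall>j<card V. a u j \<le> b v j \<and> a v j \<le> b u j)"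
      by (rule box_inter) (use le uv in auto)
    also have "\<dots> \<longleftrightarrow> {u, v} \<in> H"
    proof
      assume h: "\<forall>j<card V. a u j \<le> b v j \<and> a v j \<le> b u j"
      obtain i where i: "i < card V" "f i = u" using f uv unfolding bij_betw_def by force
      with h have "a v i \<le> 0" unfolding b_def by auto
      then have "{v, u} \<in> H" using uv i unfolding a_def by (auto split: if_splits)
      then show "{u, v} \<in> H" by (simp add: insert_commute)
    next
      assume h: "{u, v} \<in> H"
      then have h': "{v, u} \<in> H" by (simp add: insert_commute)
      show "\<forall>j<card V. a u j \<le> b v j \<and> a v j \<le> b u j"
        using h h' uv unfolding a_def b_def by auto
    qed
    finally show "{u, v} \<in> H \<longleftrightarrow> box_set (card V) (a u) (b u) \<inter> box_set (card V) (a v) (b v) \<noteq> {}"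
      by simp
  qed
  then show ?thesis by blast
qed


locale boxctx =
  fixes X V :: "'a set" and E :: "'a set set" and k :: nat
    and a b :: "'a \<Rightarrow> nat \<Rightarrow> real" and r :: "'a \<Rightarrow> nat"
  assumes finX: "finite X" and VX: "V \<subseteq> X" and sg: "simple_graph V E"
    and rep: "box_representation V (compl_edges V E) k a b"
    and rinj: "inj_on r V"
begin

definition key :: "nat \<Rightarrow> 'a \<Rightarrow> real \<times> nat" where
  "key j v = (a v j, r v)"

definition top :: "'a set \<Rightarrow> 'a set" where
  "top \<sigma> = {v\<in>\<sigma>. \<exists>j<k. \<forall>u\<in>\<sigma>. key j u \<le> key j v}"

definition ZZ :: "'a set \<Rightarrow> 'a set" where
  "ZZ T = {v\<in>V. \<forall>j<k. \<exists>w\<in>T. (\<forall>u\<in>T. key j u \<le> key j w) \<and> key j v \<le> key j w \<and> a w j \<le> b v j}"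

definition indep :: "'a set \<Rightarrow> bool" where
  "indep \<sigma> \<longleftrightarrow> \<sigma> \<subseteq> V \<and> (\<forall>u\<in>\<sigma>. \<forall>v\<in>\<sigma>. u \<noteq> v \<longrightarrow> {u, v} \<notin> E)"

lemma finV: "finite V" using finX VX finite_subset by blast

lemma key_a: "key j u \<le> key j v \<Longrightarrow> a u j \<le> a v j"
  unfolding key_def by (auto simp: less_eq_prod_def)

lemma key_inj: "u \<in> V \<Longrightarrow> v \<in> V \<Longrightarrow> key j u = key j v \<Longrightarrow> u = v"
  unfolding key_def using rinj by (auto dest: inj_onD)

lemma argmax:
  assumes "\<sigma> \<subseteq> V" "\<sigma> \<noteq> {}"
  shows "\<exists>w\<in>\<sigma>. \<forall>u\<in>\<sigma>. key j u \<le> key j w"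
proof -
  have fin: "finite \<sigma>" using assms finV finite_subset by blast
  have "Max (key j ` \<sigma>) \<in> key j ` \<sigma>" using fin assms by (intro Max_in) auto
  then obtain w where "w \<in> \<sigma>" "key j w = Max (key j ` \<sigma>)" by auto
  moreover have "\<forall>u\<in>\<sigma>. key j u \<le> Max (key j ` \<sigma>)"
    using fin by (auto intro: Max_ge)
  ultimately show ?thesis apply - apply (rule bexI[of _ w]) apply simp_all done
qed

lemma ab: "v \<in> V \<Longrightarrow> j < k \<Longrightarrow> a v j \<le> b v j"
  using rep unfolding box_representation_def by auto

lemma inter_le:
  assumes "u \<in> V" "v \<in> V" "u \<noteq> v" "{u, v} \<notin> E" "j < k"
  shows "a u j \<le> b v j"
proof -
  have "{u, v} \<in> compl_edges V E" using compl_edges_iff assms by metis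
  then have "box_set k (a u) (b u) \<inter> box_set k (a v) (b v) \<noteq> {}"
    using rep assms unfolding box_representation_def by auto
  then show ?thesis using box_inter[of k "a u" "b u" "a v" "b v"] ab assms by auto
qed

lemma sigma_ZZ:
  assumes "indep \<sigma>"
  shows "\<sigma> \<subseteq> ZZ (top \<sigma>)"
proof
  fix v assume v: "v \<in> \<sigma>"
  have sV: "\<sigma> \<subseteq> V" using assms indep_def by auto
  show "v \<in> ZZ (top \<sigma>)" unfolding ZZ_def
  proof (intro CollectI conjI allI impI)
    show "v \<in> V" using v sV by auto
    fix j assume j: "j < k"
    obtain w where w: "w \<in> \<sigma>" "\<forall>u\<in>\<sigma>. key j u \<le> key j w" using argmax[OF sV] v by blast
    have wT: "w \<in> top \<sigma>" using w j unfolding top_def by auto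
    have "a w j \<le> b v j"
    proof (cases "v = w")
      case True then show ?thesis using ab j v sV by auto
    next
      case False
      have "{w, v} \<notin> E" using assms False w v unfolding indep_def by auto
      then show ?thesis using inter_le[of w v j] False w v sV j by auto
    qed
    then show "\<exists>w\<in>top \<sigma>. (\<forall>u\<in>top \<sigma>. key j u \<le> key j w) \<and> key j v \<le> key j w \<and> a w j \<le> b v j"
      using wT w v unfolding top_def by auto
  qed
qed

lemma top_sub: "top \<sigma> \<subseteq> \<sigma>" unfolding top_def by auto

lemma top_unique:
  assumes "\<sigma>' \<subseteq> V" "top \<sigma>' \<subseteq> \<sigma>" "\<sigma> \<subseteq> ZZ (top \<sigma>')" "\<sigma> \<subseteq> V"
  shows "top \<sigma> = top \<sigma>'"
proof
  show "top \<sigma> \<subseteq> top \<sigma>'"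
  proof
    fix v assume "v \<in> top \<sigma>"
    then obtain j where j: "j < k" "v \<in> \<sigma>" "\<forall>u\<in>\<sigma>. key j u \<le> key j v" unfolding top_def by auto
    then have "v \<in> ZZ (top \<sigma>')" using assms by auto
    then obtain w where w: "w \<in> top \<sigma>'" "key j v \<le> key j w" using j unfolding ZZ_def by auto
    have "w \<in> \<sigma>" using w assms by auto
    then have "key j w \<le> key j v" using j by auto
    then have "key j w = key j v" using w by auto
    then have "w = v" using key_inj w j assms top_sub by blast
    then show "v \<in> top \<sigma>'" using w by auto
  qed
next
  show "top \<sigma>' \<subseteq> top \<sigma>"
  proof
    fix v assume v: "v \<in> top \<sigma>'"
    then obtain j where j: "j < k" "\<forall>u\<in>\<sigma>'. key j u \<le> key j v" unfolding top_def by auto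
    have "\<forall>u\<in>\<sigma>. key j u \<le> key j v"
    proof
      fix u assume "u \<in> \<sigma>"
      then have "u \<in> ZZ (top \<sigma>')" using assms by auto
      then obtain w where w: "w \<in> top \<sigma>'" "key j u \<le> key j w" using j unfolding ZZ_def by auto
      have "key j w \<le> key j v" using j w top_sub by blast
      then show "key j u \<le> key j v" using w by auto
    qed
    then show "v \<in> top \<sigma>" using v j assms unfolding top_def by auto
  qed
qed

lemma ZZ_indep:
  assumes "x \<in> ZZ T" "y \<in> ZZ T" "x \<noteq> y" "T \<subseteq> V"
  shows "{x, y} \<notin> E"
proof
  assume xyE: "{x, y} \<in> E"
  have xy: "x \<in> V" "y \<in> V" using assms unfolding ZZ_def by auto
  have "\<forall>j<k. a x j \<le> b y j \<and> a y j \<le> b x j"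
  proof (intro allI impI)
    fix j assume j: "j < k"
    obtain w where w: "w \<in> T" "\<forall>u\<in>T. key j u \<le> key j w" "key j x \<le> key j w" "a w j \<le> b x j"
      using assms j unfolding ZZ_def by blast
    obtain w' where w': "w' \<in> T" "\<forall>u\<in>T. key j u \<le> key j w'" "key j y \<le> key j w'" "a w' j \<le> b y j"
      using assms j unfolding ZZ_def by blast
    have "key j w = key j w'" using w w' by (meson order_antisym)
    then have "w = w'" using key_inj w w' assms by blast
    then show "a x j \<le> b y j \<and> a y j \<le> b x j" using w w' key_a by (meson order_trans)
  qed
  then have "box_set k (a x) (b x) \<inter> box_set k (a y) (b y) \<noteq> {}"
    using box_inter ab xy by auto
  then have "{x, y} \<in> compl_edges V E" using rep xy assms unfolding box_representation_def by auto
  then show False using compl_edges_iff xy assms xyE by metis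
qed

lemma card_top:
  assumes "\<sigma> \<subseteq> V" shows "card (top \<sigma>) \<le> k"
proof -
  define g where "g = (\<lambda>j. SOME w. w \<in> \<sigma> \<and> (\<forall>u\<in>\<sigma>. key j u \<le> key j w))"
  have "top \<sigma> \<subseteq> g ` {..<k}"
  proof
    fix v assume "v \<in> top \<sigma>"
    then obtain j where j: "j < k" "v \<in> \<sigma>" "\<forall>u\<in>\<sigma>. key j u \<le> key j v" unfolding top_def by auto
    then have "\<exists>w. w \<in> \<sigma> \<and> (\<forall>u\<in>\<sigma>. key j u \<le> key j w)" by blast
    from someI_ex[OF this] have g: "g j \<in> \<sigma>" "\<forall>u\<in>\<sigma>. key j u \<le> key j (g j)" unfolding g_def by auto
    have "key j (g j) = key j v" using g j by (intro order_antisym) auto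
    then have "g j = v" using key_inj g j assms by blast
    then show "v \<in> g ` {..<k}" using j by auto
  qed
  then have "card (top \<sigma>) \<le> card (g ` {..<k})" by (intro card_mono) auto
  also have "\<dots> \<le> k" using card_image_le[of "{..<k}" g] by auto
  finally show ?thesis .
qed


lemma main: "sreg X E \<le> k"
proof -
  define P where "P = (\<lambda>\<sigma>. (top \<sigma>, ZZ (top \<sigma>) \<union> (X - V))) ` {\<sigma>. indep \<sigma>}"
  have "{\<sigma>. indep \<sigma>} \<subseteq> Pow V" unfolding indep_def by auto
  then have "finite P" unfolding P_def using finV by (meson finite_Pow_iff finite_imageI finite_subset)
  then obtain D where D: "set D = P" "distinct D" using finite_distinct_list by blast
  have ZZV: "ZZ T \<subseteq> V" for T unfolding ZZ_def by auto
  have indV: "indep \<sigma> \<Longrightarrow> \<sigma> \<subseteq> V" for \<sigma> unfolding indep_def by auto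
  have edge: "\<exists>x y. e = {x, y} \<and> x \<noteq> y \<and> x \<in> V \<and> y \<in> V" if "e \<in> E" for e
    using sg that unfolding simple_graph_def by auto
  have dec: "sq_stanley_decomp X E D"
    unfolding sq_stanley_decomp_def
  proof (rule conjI)
   show "\<forall>UZ\<in>set D. fst UZ \<subseteq> snd UZ \<and> snd UZ \<subseteq> X \<and> (\<forall>m\<in>stanley_space UZ. \<not> in_edge_ideal E m)"
   proof
    fix UZ assume "UZ \<in> set D"
    then obtain \<sigma> where s: "indep \<sigma>" "UZ = (top \<sigma>, ZZ (top \<sigma>) \<union> (X - V))" using D P_def by auto
    have "top \<sigma> \<subseteq> \<sigma>" "\<sigma> \<subseteq> ZZ (top \<sigma>)" using top_sub sigma_ZZ[OF s(1)] by auto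
    then have A: "fst UZ \<subseteq> snd UZ" using s by auto
    have B: "snd UZ \<subseteq> X" using s ZZV VX by auto
    have C: "\<forall>m\<in>stanley_space UZ. \<not> in_edge_ideal E m"
    proof (intro ballI notI)
      fix m assume m: "m \<in> stanley_space UZ" and ie: "in_edge_ideal E m"
      then obtain e where e: "e \<in> E" "\<forall>x\<in>e. 0 < m x" unfolding in_edge_ideal_def by auto
      then obtain x y where xy: "e = {x, y}" "x \<noteq> y" "x \<in> V" "y \<in> V" using edge by blast
      have sp: "\<forall>z. z \<notin> ZZ (top \<sigma>) \<union> (X - V) \<longrightarrow> m z = 0"
        using m s unfolding stanley_space_def by auto
      have "0 < m x" "0 < m y" using e xy by auto
      then have "x \<in> ZZ (top \<sigma>) \<union> (X - V)" "y \<in> ZZ (top \<sigma>) \<union> (X - V)" using sp by auto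
      then have xZ: "x \<in> ZZ (top \<sigma>)" "y \<in> ZZ (top \<sigma>)" using xy by auto
      have "top \<sigma> \<subseteq> V" using top_sub indV[OF s(1)] by blast
      then have "{x, y} \<notin> E" using ZZ_indep[OF xZ xy(2)] by blast
      then show False using e xy by auto
    qed
    show "fst UZ \<subseteq> snd UZ \<and> snd UZ \<subseteq> X \<and> (\<forall>m\<in>stanley_space UZ. \<not> in_edge_ideal E m)"
      using A B C by blast
   qed
  next
   show "\<forall>m\<in>monomials X. \<not> in_edge_ideal E m \<longrightarrow> (\<exists>!i. i < length D \<and> m \<in> stanley_space (D ! i))"
   proof (intro ballI impI)
    fix m assume m: "m \<in> monomials X" and nie: "\<not> in_edge_ideal E m"
    define \<sigma> where "\<sigma> = {v\<in>V. 0 < m v}"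
    have ind: "indep \<sigma>" unfolding indep_def
    proof (intro conjI ballI impI)
      show "\<sigma> \<subseteq> V" unfolding \<sigma>_def by auto
      fix u v assume "u \<in> \<sigma>" "v \<in> \<sigma>" "u \<noteq> v"
      then show "{u, v} \<notin> E" using nie unfolding in_edge_ideal_def \<sigma>_def by auto
    qed
    have inP: "(top \<sigma>, ZZ (top \<sigma>) \<union> (X - V)) \<in> set D" using D P_def ind by auto
    have msp: "m \<in> stanley_space (top \<sigma>, ZZ (top \<sigma>) \<union> (X - V))"
      unfolding stanley_space_def
    proof (intro CollectI conjI allI impI ballI)
      fix x assume x: "x \<notin> snd (top \<sigma>, ZZ (top \<sigma>) \<union> (X - V))"
      show "m x = 0"
      proof (rule ccontr)
        assume "m x \<noteq> 0"
        then have "x \<in> X" using m unfolding monomials_def by auto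
        moreover have "x \<in> V" using x calculation by auto
        ultimately have "x \<in> \<sigma>" using \<open>m x \<noteq> 0\<close> unfolding \<sigma>_def by auto
        then show False using sigma_ZZ[OF ind] x by auto
      qed
    next
      fix x assume "x \<in> fst (top \<sigma>, ZZ (top \<sigma>) \<union> (X - V))"
      then have "x \<in> \<sigma>" using top_sub[of \<sigma>] by auto
      then show "1 \<le> m x" unfolding \<sigma>_def by auto
    qed
    obtain i where i: "i < length D" "D ! i = (top \<sigma>, ZZ (top \<sigma>) \<union> (X - V))"
      using inP by (metis in_set_conv_nth)
    have uniq: "D ! i' = (top \<sigma>, ZZ (top \<sigma>) \<union> (X - V))"
      if i': "i' < length D" "m \<in> stanley_space (D ! i')" for i'
    proof -
      have "D ! i' \<in> P" using D i' by auto
      then obtain \<sigma>' where s: "indep \<sigma>'" "D ! i' = (top \<sigma>', ZZ (top \<sigma>') \<union> (X - V))"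
        unfolding P_def by auto
      have sp: "\<forall>x. x \<notin> ZZ (top \<sigma>') \<union> (X - V) \<longrightarrow> m x = 0" "\<forall>x\<in>top \<sigma>'. 1 \<le> m x"
        using i'(2) s unfolding stanley_space_def by auto
      have "top \<sigma>' \<subseteq> \<sigma>"
      proof
        fix x assume x: "x \<in> top \<sigma>'"
        then have "x \<in> V" using top_sub[of \<sigma>'] indV[OF s(1)] by auto
        moreover have "1 \<le> m x" using sp(2) x by auto
        ultimately show "x \<in> \<sigma>" unfolding \<sigma>_def by auto
      qed
      moreover have "\<sigma> \<subseteq> ZZ (top \<sigma>')"
      proof
        fix x assume "x \<in> \<sigma>"
        then have "x \<in> V" "m x \<noteq> 0" unfolding \<sigma>_def by auto
        then show "x \<in> ZZ (top \<sigma>')" using sp(1) by auto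
      qed
      ultimately have "top \<sigma> = top \<sigma>'" using top_unique indV s(1) ind by blast
      then show ?thesis using s by simp
    qed
    show "\<exists>!i. i < length D \<and> m \<in> stanley_space (D ! i)"
    proof (rule ex1I[of _ i])
      show "i < length D \<and> m \<in> stanley_space (D ! i)" using i msp by simp
      fix i' assume "i' < length D \<and> m \<in> stanley_space (D ! i')"
      then have "D ! i' = D ! i" using uniq i by auto
      then show "i' = i" using D(2) i \<open>i' < length D \<and> _\<close> nth_eq_iff_index_eq by blast
    qed
   qed
  qed
  have "stanley_reg_of D \<le> k"
    unfolding stanley_reg_of_def
  proof (rule Max.boundedI)
    show "finite (insert 0 ((\<lambda>UZ. card (fst UZ)) ` set D))" by simp
    show "insert 0 ((\<lambda>UZ. card (fst UZ)) ` set D) \<noteq> {}" by simp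
    fix c assume "c \<in> insert 0 ((\<lambda>UZ. card (fst UZ)) ` set D)"
    then show "c \<le> k" using D P_def card_top indV by auto
  qed
  moreover have "sreg X E \<le> stanley_reg_of D"
    unfolding sreg_def by (rule cInf_lower) (use dec in auto)
  ultimately show ?thesis by simp
qed
end

theorem corollary5p11:
  fixes X V :: "'a set" and E :: "'a set set"
  assumes "finite X" and "V \<subseteq> X" and "simple_graph V E"
  shows "sreg X E \<le> boxicity V (compl_edges V E)"
proof -
  have fV: "finite V" using assms finite_subset by blast
  obtain r :: "'a \<Rightarrow> nat" where r: "inj_on r V" using finite_imp_inj_to_nat_seg[OF fV] by blast
  have "\<exists>k a b. box_representation V (compl_edges V E) k a b" using rep_exists[OF fV] by blast
  then have "\<exists>a b. box_representation V (compl_edges V E) (boxicity V (compl_edges V E)) a b"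
    unfolding boxicity_def by (rule LeastI_ex)
  then obtain a b where ab: "box_representation V (compl_edges V E) (boxicity V (compl_edges V E)) a b"
    by blast
  show ?thesis
    by (rule boxctx.main[of X V E _ a b r]) (unfold_locales, use assms ab r in auto)
qed

end
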